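(* Let $\psi:A_1\to A_2$ be an isomorphism of double quasi-Poisson algebras over $B=\bigoplus_{s\in I}\Bbbk e_s$. If $A_1,A_2$ are quasi-Hamiltonian algebras with multiplicative moment maps $\Phi_1,\Phi_2$, then $\Phi_2=\nu\,\psi(\Phi_1)$ for some $\nu\in B^\times$ (i.e. $\nu=\sum_s\nu_se_s$ with all $\nu_s\in\Bbbk^\times$). In particular, a multiplicative moment map on a double quasi-Poisson algebra is unique up to multiplication by an element of $B^\times$.
   Context: $\Bbbk$ field of characteristic $0$; algebras associative, unital, finitely generated; $B=\bigoplus_{s\in I}\Bbbk e_s$, orthogonal idempotents summing to $1$. Sweedler notation, $(d'\otimes d'')^\circ=d''\otimes d'$, outer bimodule $a(d'\otimes d'')b=ad'\otimes d''b$. $B$-linear double bracket: bilinear $\{\!\{-,-\}\!\}:A\times A\to A\otimes A$, $\{\!\{a,b\}\!\}=-\{\!\{b,a\}\!\}^\circ$, $\{\!\{a,bc\}\!\}=\{\!\{a,b\}\!\}c+b\{\!\{a,c\}\!\}$, zero on $B$. Triple bracket $\{\!\{a,b,c\}\!\}=\{\!\{a,\{\!\{b,c\}\!\}'\}\!\}\otimes\{\!\{b,c\}\!\}''+\tau(\{\!\{b,\{\!\{c,a\}\!\}'\}\!\}\otimes\{\!\{c,a\}\!\}'')+\tau^2(\{\!\{c,\{\!\{a,b\}\!\}'\}\!\}\otimes\{\!\{a,b\}\!\}'')$, $\tau(a_1\otimes a_2\otimes a_3)=a_3\otimes a_1\otimes a_2$. Double quasi-Poisson: $\{\!\{a,b,c\}\!\}=\frac14\sum_s(ce_sa\otimes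 e_sb\otimes e_s-ce_sa\otimes e_s\otimes be_s-ce_s\otimes ae_sb\otimes e_s+ce_s\otimes ae_s\otimes be_s-e_sa\otimes e_sb\otimes e_sc+e_sa\otimes e_s\otimes be_sc+e_s\otimes ae_sb\otimes e_sc-e_s\otimes ae_s\otimes be_sc)$. Multiplicative moment map: invertible $\Phi=\sum_s\Phi_s$, $\Phi_s\in e_sAe_s$, with $\{\!\{\Phi_s,a\}\!\}=\frac12(ae_s\otimes\Phi_s-e_s\otimes\Phi_sa+a\Phi_s\otimes e_s-\Phi_s\otimes e_sa)$ for all $a,s$; quasi-Hamiltonian algebra = double quasi-Poisson algebra with multiplicative moment map. An isomorphism of double quasi-Poisson algebras is a $B$-algebra isomorphism $\psi$ with $\{\!\{\psi a,\psi b\}\!\}_2=(\psi\otimes\psi)\{\!\{a,b\}\!\}_1$. *)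

theory Defs
  imports Complex_Main
begin

text \<open>
A \<open>k\<close>-algebra is a type \<open>'a :: ring_1\<close> (the whole type is the algebra)
together with a scalar multiplication \<open>scale :: 'k \<Rightarrow> 'a \<Rightarrow> 'a\<close> over a field \<open>'k\<close>
of characteristic 0.

An element of \<open>A \<otimes>_k A\<close> is represented by a finite formal sum
\<open>\<Sum> c_i (x_i \<otimes> y_i)\<close>, i.e. a list of triples \<open>(c_i, x_i, y_i)\<close>.  Two such formal
sums denote the same element of \<open>A \<otimes>_k A\<close> iff every \<open>k\<close>-bilinear form
\<open>A \<times> A \<rightarrow> k\<close> takes the same value on them (the dual of \<open>A \<otimes> A\<close> is the space of
bilinear forms, and over a field the dual separates points).  Likewise for
\<open>A \<otimes> A \<otimes> A\<close> with trilinear forms.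
\<close>

definition k_algebra :: "('k::field \<Rightarrow> 'a::ring_1 \<Rightarrow> 'a) \<Rightarrow> bool" where
  "k_algebra scale \<longleftrightarrow> vector_space scale \<and>
     (\<forall>c x y. scale c (x * y) = scale c x * y \<and> scale c (x * y) = x * scale c y)"

inductive_set alg_gen :: "('k \<Rightarrow> 'a::ring_1 \<Rightarrow> 'a) \<Rightarrow> 'a set \<Rightarrow> 'a set"
  for scale S where
  gen: "x \<in> S \<Longrightarrow> x \<in> alg_gen scale S"
| one: "1 \<in> alg_gen scale S"
| add: "x \<in> alg_gen scale S \<Longrightarrow> y \<in> alg_gen scale S \<Longrightarrow> x + y \<in> alg_gen scale S"
| mult: "x \<in> alg_gen scale S \<Longrightarrow> y \<in> alg_gen scale S \<Longrightarrow> x * y \<in> alg_gen scale S"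
| smult: "x \<in> alg_gen scale S \<Longrightarrow> scale c x \<in> alg_gen scale S"

definition fin_gen_algebra :: "('k::field \<Rightarrow> 'a::ring_1 \<Rightarrow> 'a) \<Rightarrow> bool" where
  "fin_gen_algebra scale \<longleftrightarrow> k_algebra scale \<and> (\<exists>S. finite S \<and> alg_gen scale S = UNIV)"

text \<open>\<open>B = \<Oplus>_{s\<in>I} k e_s\<close>: complete family of orthogonal idempotents in \<open>A\<close>.\<close>
definition B_idempotents :: "('i \<Rightarrow> 'a::ring_1) \<Rightarrow> 'i set \<Rightarrow> bool" where
  "B_idempotents e I \<longleftrightarrow> finite I \<and>
     (\<forall>s\<in>I. \<forall>t\<in>I. e s * e t = (if s = t then e s else 0)) \<and> (\<Sum>s\<in>I. e s) = 1"

definition invertible_elem :: "'a::ring_1 \<Rightarrow> bool" where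
  "invertible_elem x \<longleftrightarrow> (\<exists>y. x * y = 1 \<and> y * x = 1)"

type_synonym ('k, 'a) tensor2 = "('k \<times> 'a \<times> 'a) list"
type_synonym ('k, 'a) tensor3 = "('k \<times> 'a \<times> 'a \<times> 'a) list"

definition bilin_form :: "('k::field \<Rightarrow> 'a::ab_group_add \<Rightarrow> 'a) \<Rightarrow> ('a \<Rightarrow> 'a \<Rightarrow> 'k) \<Rightarrow> bool" where
  "bilin_form scale f \<longleftrightarrow>
     (\<forall>y. Vector_Spaces.linear scale ((*)) (\<lambda>x. f x y)) \<and>
     (\<forall>x. Vector_Spaces.linear scale ((*)) (\<lambda>y. f x y))"

definition trilin_form :: "('k::field \<Rightarrow> 'a::ab_group_add \<Rightarrow> 'a) \<Rightarrow> ('a \<Rightarrow> 'a \<Rightarrow> 'a \<Rightarrow> 'k) \<Rightarrow> bool" where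
  "trilin_form scale f \<longleftrightarrow>
     (\<forall>y z. Vector_Spaces.linear scale ((*)) (\<lambda>x. f x y z)) \<and>
     (\<forall>x z. Vector_Spaces.linear scale ((*)) (\<lambda>y. f x y z)) \<and>
     (\<forall>x y. Vector_Spaces.linear scale ((*)) (\<lambda>z. f x y z))"

definition ev2 :: "('a \<Rightarrow> 'a \<Rightarrow> 'k::comm_ring_1) \<Rightarrow> ('k, 'a) tensor2 \<Rightarrow> 'k" where
  "ev2 f t = (\<Sum>(c, x, y)\<leftarrow>t. c * f x y)"

definition ev3 :: "('a \<Rightarrow> 'a \<Rightarrow> 'a \<Rightarrow> 'k::comm_ring_1) \<Rightarrow> ('k, 'a) tensor3 \<Rightarrow> 'k" where
  "ev3 f t = (\<Sum>(c, x, y, z)\<leftarrow>t. c * f x y z)"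

definition teq2 :: "('k::field \<Rightarrow> 'a::ab_group_add \<Rightarrow> 'a) \<Rightarrow> ('k, 'a) tensor2 \<Rightarrow> ('k, 'a) tensor2 \<Rightarrow> bool" where
  "teq2 scale t u \<longleftrightarrow> (\<forall>f. bilin_form scale f \<longrightarrow> ev2 f t = ev2 f u)"

definition teq3 :: "('k::field \<Rightarrow> 'a::ab_group_add \<Rightarrow> 'a) \<Rightarrow> ('k, 'a) tensor3 \<Rightarrow> ('k, 'a) tensor3 \<Rightarrow> bool" where
  "teq3 scale t u \<longleftrightarrow> (\<forall>f. trilin_form scale f \<longrightarrow> ev3 f t = ev3 f u)"

definition double_bracket ::
  "('k::field \<Rightarrow> 'a::ring_1 \<Rightarrow> 'a) \<Rightarrow> ('i \<Rightarrow> 'a) \<Rightarrow> 'i set \<Rightarrow> ('a \<Rightarrow> 'a \<Rightarrow> ('k, 'a) tensor2) \<Rightarrow> bool" where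
  "double_bracket scale e I br \<longleftrightarrow>
     (\<forall>x y z. teq2 scale (br (x + y) z) (br x z @ br y z)) \<and>
     (\<forall>c x z. teq2 scale (br (scale c x) z) (map (\<lambda>(d, u, v). (c * d, u, v)) (br x z))) \<and>
     (\<forall>x y z. teq2 scale (br z (x + y)) (br z x @ br z y)) \<and>
     (\<forall>c x z. teq2 scale (br z (scale c x)) (map (\<lambda>(d, u, v). (c * d, u, v)) (br z x))) \<and>
     (\<forall>a b. teq2 scale (br a b) (map (\<lambda>(d, u, v). (- d, v, u)) (br b a))) \<and>
     (\<forall>a b c. teq2 scale (br a (b * c))
        (map (\<lambda>(d, u, v). (d, u, v * c)) (br a b) @ map (\<lambda>(d, u, v). (d, b * u, v)) (br a c))) \<and>
     (\<forall>s\<in>I. \<forall>a. teq2 scale (br (e s) a) [])"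

definition leg1 :: "('a \<Rightarrow> 'a \<Rightarrow> ('k::times, 'a) tensor2) \<Rightarrow> 'a \<Rightarrow> ('k, 'a) tensor2 \<Rightarrow> ('k, 'a) tensor3" where
  "leg1 br a t = concat (map (\<lambda>(c, x, y). map (\<lambda>(d, u, v). (c * d, u, v, y)) (br a x)) t)"

definition tau3 :: "('k, 'a) tensor3 \<Rightarrow> ('k, 'a) tensor3" where
  "tau3 t = map (\<lambda>(c, x, y, z). (c, z, x, y)) t"

definition triple_bracket :: "('a \<Rightarrow> 'a \<Rightarrow> ('k::times, 'a) tensor2) \<Rightarrow> 'a \<Rightarrow> 'a \<Rightarrow> 'a \<Rightarrow> ('k, 'a) tensor3" where
  "triple_bracket br a b c =
     leg1 br a (br b c) @ tau3 (leg1 br b (br c a)) @ tau3 (tau3 (leg1 br c (br a b)))"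

definition qp_term :: "('i \<Rightarrow> 'a::ring_1) \<Rightarrow> 'i \<Rightarrow> 'a \<Rightarrow> 'a \<Rightarrow> 'a \<Rightarrow> ('k::field, 'a) tensor3" where
  "qp_term e s a b c =
    [( 1/4, c * e s * a, e s * b, e s),
     (-1/4, c * e s * a, e s, b * e s),
     (-1/4, c * e s, a * e s * b, e s),
     ( 1/4, c * e s, a * e s, b * e s),
     (-1/4, e s * a, e s * b, e s * c),
     ( 1/4, e s * a, e s, b * e s * c),
     ( 1/4, e s, a * e s * b, e s * c),
     (-1/4, e s, a * e s, b * e s * c)]"

text \<open>Double quasi-Poisson algebra.  The right-hand side is the tensor
\<open>\<Sum>_{s\<in>I} qp_term s\<close>; its value on a trilinear form is the sum of the values.\<close>
definition double_quasi_Poisson ::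
  "('k::field_char_0 \<Rightarrow> 'a::ring_1 \<Rightarrow> 'a) \<Rightarrow> ('i \<Rightarrow> 'a) \<Rightarrow> 'i set \<Rightarrow> ('a \<Rightarrow> 'a \<Rightarrow> ('k, 'a) tensor2) \<Rightarrow> bool" where
  "double_quasi_Poisson scale e I br \<longleftrightarrow>
     fin_gen_algebra scale \<and> B_idempotents e I \<and> double_bracket scale e I br \<and>
     (\<forall>a b c f. trilin_form scale f \<longrightarrow>
        ev3 f (triple_bracket br a b c) = (\<Sum>s\<in>I. ev3 f (qp_term e s a b c)))"

text \<open>Multiplicative moment map \<open>\<Phi> = \<Sum>_s \<Phi>_s\<close>, \<open>\<Phi>_s \<in> e_s A e_s\<close>
(necessarily \<open>\<Phi>_s = e_s \<Phi> e_s\<close>).\<close>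
definition mult_moment_map ::
  "('k::field_char_0 \<Rightarrow> 'a::ring_1 \<Rightarrow> 'a) \<Rightarrow> ('i \<Rightarrow> 'a) \<Rightarrow> 'i set \<Rightarrow> ('a \<Rightarrow> 'a \<Rightarrow> ('k, 'a) tensor2) \<Rightarrow> 'a \<Rightarrow> bool" where
  "mult_moment_map scale e I br \<Phi> \<longleftrightarrow>
     invertible_elem \<Phi> \<and> \<Phi> = (\<Sum>s\<in>I. e s * \<Phi> * e s) \<and>
     (\<forall>s\<in>I. \<forall>a. let \<Phi>s = e s * \<Phi> * e s in
        teq2 scale (br \<Phi>s a)
          [(1/2, a * e s, \<Phi>s), (-1/2, e s, \<Phi>s * a), (1/2, a * \<Phi>s, e s), (-1/2, \<Phi>s, e s * a)])"

definition quasi_Hamiltonian ::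
  "('k::field_char_0 \<Rightarrow> 'a::ring_1 \<Rightarrow> 'a) \<Rightarrow> ('i \<Rightarrow> 'a) \<Rightarrow> 'i set \<Rightarrow> ('a \<Rightarrow> 'a \<Rightarrow> ('k, 'a) tensor2) \<Rightarrow> 'a \<Rightarrow> bool" where
  "quasi_Hamiltonian scale e I br \<Phi> \<longleftrightarrow>
     double_quasi_Poisson scale e I br \<and> mult_moment_map scale e I br \<Phi>"

definition dqP_iso ::
  "('k::field \<Rightarrow> 'a::ring_1 \<Rightarrow> 'a) \<Rightarrow> ('i \<Rightarrow> 'a) \<Rightarrow> ('a \<Rightarrow> 'a \<Rightarrow> ('k, 'a) tensor2) \<Rightarrow>
   ('k \<Rightarrow> 'b::ring_1 \<Rightarrow> 'b) \<Rightarrow> ('i \<Rightarrow> 'b) \<Rightarrow> ('b \<Rightarrow> 'b \<Rightarrow> ('k, 'b) tensor2) \<Rightarrow>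
   'i set \<Rightarrow> ('a \<Rightarrow> 'b) \<Rightarrow> bool" where
  "dqP_iso scale1 e1 br1 scale2 e2 br2 I \<psi> \<longleftrightarrow>
     bij \<psi> \<and> (\<forall>x y. \<psi> (x + y) = \<psi> x + \<psi> y) \<and> (\<forall>x y. \<psi> (x * y) = \<psi> x * \<psi> y) \<and>
     \<psi> 1 = 1 \<and> (\<forall>c x. \<psi> (scale1 c x) = scale2 c (\<psi> x)) \<and> (\<forall>s\<in>I. \<psi> (e1 s) = e2 s) \<and>
     (\<forall>a b. teq2 scale2 (br2 (\<psi> a) (\<psi> b)) (map (\<lambda>(c, x, y). (c, \<psi> x, \<psi> y)) (br1 a b)))"

end

theory Submission
  imports Defs
begin

lemma functional_sep:
  fixes scale :: "'k::field \<Rightarrow> 'a::ab_group_add \<Rightarrow> 'a"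
  assumes "vector_space scale" and "x \<noteq> 0"
  shows "\<exists>h. Vector_Spaces.linear scale ((*)) h \<and> h x = 1"
proof -
  interpret vector_space_pair scale "(*) :: 'k \<Rightarrow> 'k \<Rightarrow> 'k"
    by (intro vector_space_pair.intro assms(1)) (unfold_locales, simp_all add: algebra_simps)
  have "vs1.independent {x}" using assms(2) by simp
  from linear_independent_extend[OF this, of "\<lambda>_. 1"] show ?thesis by auto
qed

lemma vs_field: "vector_space ((*) :: 'k::field \<Rightarrow> 'k \<Rightarrow> 'k)"
  by unfold_locales (simp_all add: algebra_simps)

lemma ev2_map_psi:
  "ev2 f (map (\<lambda>(c, x, y). (c, \<psi> x, \<psi> y)) t) = ev2 (\<lambda>x y. f (\<psi> x) (\<psi> y)) t"
  by (induct t) (auto simp: ev2_def)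

lemma ev2_swap:
  fixes f :: "'a \<Rightarrow> 'a \<Rightarrow> 'k::comm_ring_1"
  shows "ev2 f (map (\<lambda>(d, u, v). (- d, v, u)) t) = - ev2 (\<lambda>x y. f y x) t"
  by (induct t) (auto simp: ev2_def)

lemma bilin_flip: "bilin_form sc f \<Longrightarrow> bilin_form sc (\<lambda>x y. f y x)"
  by (simp add: bilin_form_def)

lemma bilin_transport:
  fixes sc1 :: "'k::field \<Rightarrow> 'a::ab_group_add \<Rightarrow> 'a" and sc2 :: "'k \<Rightarrow> 'b::ab_group_add \<Rightarrow> 'b"
  assumes "bilin_form sc2 f" "vector_space sc1"
    and add: "\<And>x y. \<psi> (x + y) = \<psi> x + \<psi> y" and sc: "\<And>c x. \<psi> (sc1 c x) = sc2 c (\<psi> x)"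
  shows "bilin_form sc1 (\<lambda>x y. f (\<psi> x) (\<psi> y))"
  using assms(1) unfolding bilin_form_def Vector_Spaces.linear_iff
  by (simp add: assms(2) vs_field add sc)

lemma bilin_prod:
  fixes sc :: "'k::field \<Rightarrow> 'a::ab_group_add \<Rightarrow> 'a"
  assumes "Vector_Spaces.linear sc (*) g" "Vector_Spaces.linear sc (*) h"
  shows "bilin_form sc (\<lambda>x y. g x * h y)"
  using assms unfolding bilin_form_def Vector_Spaces.linear_iff
  by (simp add: algebra_simps)

lemma key_sym:
  fixes sc :: "'k::field_char_0 \<Rightarrow> 'b::ring_1 \<Rightarrow> 'b"
  assumes skew: "\<forall>a b. teq2 sc (br a b) (map (\<lambda>(d, u, v). (- d, v, u)) (br b a))"
    and momP: "\<And>a f. bilin_form sc f \<Longrightarrow> ev2 f (br P a) =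
        ev2 f [(1/2, a * e, P), (-1/2, e, P * a), (1/2, a * P, e), (-1/2, P, e * a)]"
    and momQ: "\<And>a f. bilin_form sc f \<Longrightarrow> ev2 f (br Q a) =
        ev2 f [(1/2, a * e, Q), (-1/2, e, Q * a), (1/2, a * Q, e), (-1/2, Q, e * a)]"
    and h: "e * P = P" "P * e = P" "e * Q = Q" "Q * e = Q"
    and bf: "bilin_form sc f"
  shows "f Q P = f P Q"
proof -
  have flip: "bilin_form sc (\<lambda>x y. f y x)" using bf by (rule bilin_flip)
  have 1: "ev2 f (br P Q) = 1/2 * f Q P - 1/2 * f e (P*Q) + 1/2 * f (Q*P) e - 1/2 * f P Q"
    using momP[OF bf, of Q] by (simp add: ev2_def h)
  have 2: "ev2 (\<lambda>x y. f y x) (br Q P) = 1/2 * f Q P - 1/2 * f (Q*P) e + 1/2 * f e (P*Q) - 1/2 * f P Q"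
    using momQ[OF flip, of P] by (simp add: ev2_def h)
  have 3: "ev2 f (br P Q) = - ev2 (\<lambda>x y. f y x) (br Q P)"
    using skew bf unfolding teq2_def by (simp add: ev2_swap)
  from 1 2 3 show ?thesis by (simp add: field_simps)
qed

lemma idem_block:
  fixes e :: "'i \<Rightarrow> 'a::ring_1"
  assumes B: "B_idempotents e I" and dec: "P = (\<Sum>t\<in>I. e t * P * e t)" and s: "s \<in> I"
  shows "e s * P = e s * P * e s" "P * e s = e s * P * e s"
proof -
  have orth: "\<And>t. t \<in> I \<Longrightarrow> e s * e t = (if s = t then e s else 0)"
    "\<And>t. t \<in> I \<Longrightarrow> e t * e s = (if t = s then e s else 0)"
    using B s unfolding B_idempotents_def by auto
  have fin: "finite I" using B unfolding B_idempotents_def by auto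
  have "e s * P = (\<Sum>t\<in>I. e s * (e t * P * e t))" by (subst dec) (simp add: sum_distrib_left)
  also have "\<dots> = (\<Sum>t\<in>I. if s = t then e s * P * e s else 0)"
    by (rule sum.cong) (auto simp: mult.assoc[symmetric] orth)
  also have "\<dots> = e s * P * e s" using fin s by simp
  finally show "e s * P = e s * P * e s" .
  have "P * e s = (\<Sum>t\<in>I. (e t * P * e t) * e s)" by (subst dec) (simp add: sum_distrib_right)
  also have "\<dots> = (\<Sum>t\<in>I. if t = s then e s * P * e s else 0)"
    by (rule sum.cong) (auto simp: mult.assoc orth)
  also have "\<dots> = e s * P * e s" using fin s by (simp add: sum.delta')
  finally show "P * e s = e s * P * e s" .
qed

lemma block_nonzero:
  fixes e :: "'i \<Rightarrow> 'a::ring_1"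
  assumes B: "B_idempotents e I" and dec: "P = (\<Sum>t\<in>I. e t * P * e t)" and s: "s \<in> I"
    and inv: "invertible_elem P" and z: "e s * P * e s = 0"
  shows "e s = 0"
proof -
  obtain R where R: "P * R = 1" using inv unfolding invertible_elem_def by auto
  have ee: "e s * e s = e s" using B s unfolding B_idempotents_def by auto
  have "e s = e s * (P * R) * e s" using ee by (simp add: R)
  also have "\<dots> = (e s * P) * R * e s" by (simp add: mult.assoc)
  also have "\<dots> = 0" using idem_block[OF B dec s] z by simp
  finally show ?thesis .
qed

lemma hom_sum:
  fixes \<psi> :: "'a::ab_group_add \<Rightarrow> 'b::ab_group_add"
  assumes add: "\<And>x y. \<psi> (x + y) = \<psi> x + \<psi> y" and "finite S"
  shows "\<psi> (\<Sum>t\<in>S. g t) = (\<Sum>t\<in>S. \<psi> (g t))"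
proof -
  have "\<psi> 0 = \<psi> 0 + \<psi> 0" using add[of 0 0] by simp
  then have z: "\<psi> 0 = 0" by simp
  show ?thesis using assms(2) by (induct S) (simp_all add: z add)
qed


theorem mainTheorem14:
  fixes scale1 :: "'k::field_char_0 \<Rightarrow> 'a::ring_1 \<Rightarrow> 'a"
    and scale2 :: "'k \<Rightarrow> 'b::ring_1 \<Rightarrow> 'b"
    and I :: "'i set" and e1 :: "'i \<Rightarrow> 'a" and e2 :: "'i \<Rightarrow> 'b"
    and br1 :: "'a \<Rightarrow> 'a \<Rightarrow> ('k, 'a) tensor2" and br2 :: "'b \<Rightarrow> 'b \<Rightarrow> ('k, 'b) tensor2"
    and \<psi> :: "'a \<Rightarrow> 'b" and \<Phi>1 :: 'a and \<Phi>2 :: 'b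
  assumes "quasi_Hamiltonian scale1 e1 I br1 \<Phi>1"
    and "quasi_Hamiltonian scale2 e2 I br2 \<Phi>2"
    and "dqP_iso scale1 e1 br1 scale2 e2 br2 I \<psi>"
  shows "\<exists>\<nu> :: 'i \<Rightarrow> 'k. (\<forall>s\<in>I. \<nu> s \<noteq> 0) \<and> \<Phi>2 = (\<Sum>s\<in>I. scale2 (\<nu> s) (e2 s)) * \<psi> \<Phi>1"
proof -
  note Q1 = assms(1)[unfolded quasi_Hamiltonian_def double_quasi_Poisson_def mult_moment_map_def]
  note Q2 = assms(2)[unfolded quasi_Hamiltonian_def double_quasi_Poisson_def mult_moment_map_def]
  note iso = assms(3)[unfolded dqP_iso_def]
  have vs1: "vector_space scale1" and vs2: "vector_space scale2"
    using Q1 Q2 unfolding fin_gen_algebra_def k_algebra_def by auto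
  have smul2: "\<And>c x y. scale2 c (x * y) = scale2 c x * y"
    using Q2 unfolding fin_gen_algebra_def k_algebra_def by auto
  have B1: "B_idempotents e1 I" and B2: "B_idempotents e2 I" using Q1 Q2 by auto
  have fin: "finite I" using B1 unfolding B_idempotents_def by auto
  have add: "\<And>x y. \<psi> (x + y) = \<psi> x + \<psi> y" and mul: "\<And>x y. \<psi> (x * y) = \<psi> x * \<psi> y"
    and one: "\<psi> 1 = 1" and psc: "\<And>c x. \<psi> (scale1 c x) = scale2 c (\<psi> x)"
    and pe: "\<And>s. s \<in> I \<Longrightarrow> \<psi> (e1 s) = e2 s" and surj: "surj \<psi>"
    and pbr: "\<And>a b. teq2 scale2 (br2 (\<psi> a) (\<psi> b)) (map (\<lambda>(c, x, y). (c, \<psi> x, \<psi> y)) (br1 a b))"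
    using iso bij_is_surj by auto
  define P where "P = \<psi> \<Phi>1"
  define Q where "Q = \<Phi>2"
  have decP: "P = (\<Sum>t\<in>I. e2 t * P * e2 t)"
  proof -
    have "P = \<psi> (\<Sum>t\<in>I. e1 t * \<Phi>1 * e1 t)" using Q1 P_def by simp
    also have "\<dots> = (\<Sum>t\<in>I. e2 t * P * e2 t)"
      by (simp add: hom_sum[OF add fin] mul pe P_def)
    finally show ?thesis .
  qed
  have decQ: "Q = (\<Sum>t\<in>I. e2 t * Q * e2 t)" using Q2 Q_def by simp
  have invP: "invertible_elem P"
  proof -
    obtain R where "\<Phi>1 * R = 1" "R * \<Phi>1 = 1" using Q1 unfolding invertible_elem_def by auto
    then have "\<psi> \<Phi>1 * \<psi> R = 1" "\<psi> R * \<psi> \<Phi>1 = 1" by (simp_all add: mul[symmetric] one)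
    then show ?thesis unfolding invertible_elem_def P_def by blast
  qed
  have invQ: "invertible_elem Q" using Q2 Q_def by simp
  have "double_bracket scale2 e2 I br2" using assms(2) unfolding quasi_Hamiltonian_def double_quasi_Poisson_def by blast
  then have skew: "\<forall>a b. teq2 scale2 (br2 a b) (map (\<lambda>(d, u, v). (- d, v, u)) (br2 b a))"
    unfolding double_bracket_def by (rule conjunct1[OF conjunct2[OF conjunct2[OF conjunct2[OF conjunct2]]]])
  have "mult_moment_map scale2 e2 I br2 \<Phi>2" using assms(2) unfolding quasi_Hamiltonian_def by blast
  then have mm2: "\<forall>s\<in>I. \<forall>a. teq2 scale2 (br2 (e2 s * \<Phi>2 * e2 s) a)
     [(1/2, a * e2 s, e2 s * \<Phi>2 * e2 s), (-1/2, e2 s, e2 s * \<Phi>2 * e2 s * a), (1/2, a * (e2 s * \<Phi>2 * e2 s), e2 s), (-1/2, e2 s * \<Phi>2 * e2 s, e2 s * a)]"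
    unfolding mult_moment_map_def Let_def by (rule conjunct2[OF conjunct2])
  have "mult_moment_map scale1 e1 I br1 \<Phi>1" using assms(1) unfolding quasi_Hamiltonian_def by blast
  then have mm1: "\<forall>s\<in>I. \<forall>a. teq2 scale1 (br1 (e1 s * \<Phi>1 * e1 s) a)
     [(1/2, a * e1 s, e1 s * \<Phi>1 * e1 s), (-1/2, e1 s, e1 s * \<Phi>1 * e1 s * a), (1/2, a * (e1 s * \<Phi>1 * e1 s), e1 s), (-1/2, e1 s * \<Phi>1 * e1 s, e1 s * a)]"
    unfolding mult_moment_map_def Let_def by (rule conjunct2[OF conjunct2])
  have ee: "\<And>s. s \<in> I \<Longrightarrow> e2 s * e2 s = e2 s" using B2 unfolding B_idempotents_def by auto
  have blk: "\<exists>\<nu>. \<nu> \<noteq> 0 \<and> e2 s * Q * e2 s = scale2 \<nu> (e2 s * P * e2 s)" if s: "s \<in> I" for s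
  proof -
    define Ps where "Ps = e2 s * P * e2 s"
    define Qs where "Qs = e2 s * Q * e2 s"
    have hP: "e2 s * Ps = Ps" "Ps * e2 s = Ps" "e2 s * Qs = Qs" "Qs * e2 s = Qs"
      unfolding Ps_def Qs_def using ee[OF s] by (simp_all add: mult.assoc[symmetric]) (simp_all add: mult.assoc)
    have momQ: "\<And>a f. bilin_form scale2 f \<Longrightarrow> ev2 f (br2 Qs a) =
        ev2 f [(1/2, a * e2 s, Qs), (-1/2, e2 s, Qs * a), (1/2, a * Qs, e2 s), (-1/2, Qs, e2 s * a)]"
      using mm2 s unfolding teq2_def Qs_def Q_def by blast
    have momP: "ev2 f (br2 Ps a) =
        ev2 f [(1/2, a * e2 s, Ps), (-1/2, e2 s, Ps * a), (1/2, a * Ps, e2 s), (-1/2, Ps, e2 s * a)]"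
      if bf: "bilin_form scale2 f" for a f
    proof -
      obtain a1 where a1: "a = \<psi> a1" using surj using surj by (metis surjD)
      define Ps1 where "Ps1 = e1 s * \<Phi>1 * e1 s"
      have pPs: "\<psi> Ps1 = Ps" unfolding Ps1_def Ps_def P_def by (simp add: mul pe s)
      have bf1:  "bilin_form scale1 (\<lambda>x y. f (\<psi> x) (\<psi> y))"
        by (rule bilin_transport[where \<psi>=\<psi>, OF bf vs1 add psc])
      have m1: "teq2 scale1 (br1 Ps1 a1)
          [(1/2, a1 * e1 s, Ps1), (-1/2, e1 s, Ps1 * a1), (1/2, a1 * Ps1, e1 s), (-1/2, Ps1, e1 s * a1)]"
        using mm1 s unfolding Ps1_def by blast
      have "ev2 f (br2 Ps a) = ev2 f (map (\<lambda>(c, x, y). (c, \<psi> x, \<psi> y)) (br1 Ps1 a1))"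
        using pbr[of Ps1 a1] bf unfolding teq2_def pPs a1 by blast
      also have "\<dots> = ev2 (\<lambda>x y. f (\<psi> x) (\<psi> y)) (br1 Ps1 a1)" by (rule ev2_map_psi)
      also have "\<dots> = ev2 (\<lambda>x y. f (\<psi> x) (\<psi> y))
          [(1/2, a1 * e1 s, Ps1), (-1/2, e1 s, Ps1 * a1), (1/2, a1 * Ps1, e1 s), (-1/2, Ps1, e1 s * a1)]"
        using m1 bf1 unfolding teq2_def by blast
      also have "\<dots> = ev2 f [(1/2, a * e2 s, Ps), (-1/2, e2 s, Ps * a), (1/2, a * Ps, e2 s), (-1/2, Ps, e2 s * a)]"
        by (simp add: ev2_def mul pe s pPs a1)
      finally show ?thesis .
    qed
    have sym: "\<And>f. bilin_form scale2 f \<Longrightarrow> f Qs Ps = f Ps Qs"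
      by (rule key_sym[OF skew momP momQ hP])
    show ?thesis
    proof (cases "e2 s = 0")
      case True
      then show ?thesis by (intro exI[of _ 1]) (simp add: vector_space.vector_space_assms(4)[OF vs2])
    next
      case False
      have Pnz: "Ps \<noteq> 0" using block_nonzero[OF B2 decP s invP] False Ps_def by metis
      have Qnz: "Qs \<noteq> 0" using block_nonzero[OF B2 decQ s invQ] False Qs_def by metis
      obtain g where g: "Vector_Spaces.linear scale2 (*) g" "g Ps = 1"
        using functional_sep[OF vs2 Pnz] by blast
      define lam where "lam = g Qs"
      have lh: "h (Qs - scale2 lam Ps) = 0" if h: "Vector_Spaces.linear scale2 (*) h" for h
      proof -
        have "g Qs * h Ps = g Ps * h Qs" using sym[OF bilin_prod[OF g(1) h]] .
        moreover have "h (Qs - scale2 lam Ps) = h Qs - lam * h Ps"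
        proof -
          have ad: "\<And>x y. h (x + y) = h x + h y" and hs: "\<And>c x. h (scale2 c x) = c * h x"
            using h unfolding Vector_Spaces.linear_iff by auto
          have "h (Qs - scale2 lam Ps) + h (scale2 lam Ps) = h Qs"
            using ad[of "Qs - scale2 lam Ps" "scale2 lam Ps"] by simp
          then show ?thesis using hs[of lam Ps] by (simp add: algebra_simps)
        qed
        ultimately show ?thesis using g(2) lam_def by (simp add: mult.commute)
      qed
      have eq: "Qs = scale2 lam Ps"
      proof (rule ccontr)
        assume "Qs \<noteq> scale2 lam Ps"
        then have "Qs - scale2 lam Ps \<noteq> 0" by simp
        from functional_sep[OF vs2 this] lh show False by (metis zero_neq_one)
      qed
      have "lam \<noteq> 0" proof
        assume "lam = 0"
        have "scale2 (0 + 0) Ps = scale2 0 Ps + scale2 0 Ps"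
          by (rule vector_space.vector_space_assms(2)[OF vs2])
        then have "scale2 0 Ps = 0" by simp
        then show False using eq Qnz \<open>lam = 0\<close> by simp
      qed
      then show ?thesis using eq by (auto simp: Ps_def Qs_def)
    qed
  qed
  then have "\<forall>s\<in>I. \<exists>\<nu>. \<nu> \<noteq> 0 \<and> e2 s * Q * e2 s = scale2 \<nu> (e2 s * P * e2 s)" by blast
  then obtain \<nu> where \<nu>: "\<forall>s\<in>I. \<nu> s \<noteq> 0 \<and> e2 s * Q * e2 s = scale2 (\<nu> s) (e2 s * P * e2 s)"
    by (rule bchoice[THEN exE]) blast
  have "(\<Sum>s\<in>I. scale2 (\<nu> s) (e2 s)) * P = (\<Sum>s\<in>I. scale2 (\<nu> s) (e2 s * P))"
    by (simp add: sum_distrib_right smul2)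
  also have "\<dots> = (\<Sum>s\<in>I. e2 s * Q * e2 s)"
  proof (rule sum.cong)
    fix s assume s: "s \<in> I"
    show "scale2 (\<nu> s) (e2 s * P) = e2 s * Q * e2 s"
      using \<nu> s idem_block(1)[OF B2 decP s] by simp
  qed simp
  also have "\<dots> = \<Phi>2" using decQ Q_def by simp
  finally show ?thesis using \<nu> unfolding P_def by blast
qed

end
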